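(* Let $(A,\phi)$ be a step algebra over a field $\mathbb F$ and let $h:[2]\to\mathbb N$ be the map sending $1$ and $2$ to $1$. Then $a*b:=\phi_{h,(1,1)}(a,b)$ is a level algebra structure on $A$: it is bilinear, commutative, and satisfies $(a*b)*(c*d)=(a*c)*(b*d)$ for all $a,b,c,d\in A$.
   Context: $[n]=\{1,\dots,n\}$. For $n\ge1$, $\mathscr L'(n)$ is the set of $h:[n]\to\mathbb N$ with $\sum_i2^{-h(i)}=1$, with $\sigma\cdot h=h\circ\sigma^{-1}$; unit $1\in\mathscr L'(1)$, $1\mapsto0$; full composition: for $h\in\mathscr L'(n)$, $g_j\in\mathscr L'(m_j)$, $\mu(h\otimes g_1\otimes\dots\otimes g_n)$ sends $m_1+\dots+m_{j-1}+t$ ($1\le t\le m_j$) to $h(j)+g_j(t)$. Compositions ${\underline r}\in\mathrm{Comp}_p(n)$: nonnegative tuples with sum $n$, identified with partitions of $[n]$ into consecutive intervals ${\underline r}_i$ of lengths $r_i$. For an ordered partition $R$ of $[n]$, $\mathscr C_R$ = maps in $\mathscr L'(n)$ constant on each part. For $\rho\in\Sigma_p$: ${\underline r}^\rho=(r_{\rho^{-1}(i)})_i$, $\rho^*$ the associated block permutation with blocks of sizes $r_i$. ${\underline r}\circ_1(l,m)=(l,m,r_2,\dots,r_p)$. $\gamma_k(Q)=(\bigsqcup_{t=0}^{k-1}(Q_j+tm))_j$ for a partition $Q$ of $[m]$; $R\otimes Q=(R_1,\dots,R_p,Q_1+n,\dots,Q_s+n)$; ${\underline r}\diamond({\underline q}_i)_i=\gamma_{r_1}({\underline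 q}_1)\otimes\dots\otimes\gamma_{r_p}({\underline q}_p)$. A step algebra $(A,\phi)$: operations $\phi_{h,{\underline r}}:A^{\times p}\to A$ for ${\underline r}\in\mathrm{Comp}_p(n)$, $h\in\mathscr C_{\underline r}$ (and $\phi_{h,R}:=\phi_{\tau\cdot h,{\underline r}}$ for a partition $R$ and $\tau\in\Sigma_n$ with $\tau(R_i)={\underline r}_i$), satisfying (S1) $\phi_{\rho^*\cdot h,{\underline r}^\rho}(a_{\rho^{-1}(1)},\dots,a_{\rho^{-1}(p)})=\phi_{h,{\underline r}}(a_1,\dots,a_p)$; (S2) $\phi_{h,(0,{\underline r})}(a_0,a_1,\dots)=\phi_{h,{\underline r}}(a_1,\dots)$; (S3) $\phi_{h,{\underline r}}(\lambda a_1,\dots)=\lambda^{r_1}\phi_{h,{\underline r}}(a_1,\dots)$; (S4) $\binom{r_1}{l}\phi_{h,{\underline r}}(a_1,\dots,a_p)=\phi_{h,{\underline r}\circ_1(l,m)}(a_1,a_1,a_2,\dots,a_p)$ for $l+m=r_1$; (S5) $\phi_{h,{\underline r}}(a+b,a_2,\dots)=\sum_{l+m=r_1}\phi_{h,{\underline r}\circ_1(l,m)}(a,b,a_2,\dots)$; (S6) $\phi_{1,(1)}(a)=a$; (S7) for $g_i\in\mathscr C_{{\underline q}_i}$, ${\underline q}_i\in\mathrm{Comp}_{k_i}(m_i)$: $\phi_{h,{\underline r}}((\phi_{g_i,{\underline q}_i}(a_{ij})_j)_i)=\big(\prod_i\frac{1}{r_i!}\prod_j\frac{(r_iq_{ij})!}{(q_{ij}!)^{r_i}}\big)\phi_{\mu(h\otimes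 g_1^{\otimes r_1}\otimes\dots\otimes g_p^{\otimes r_p}),{\underline r}\diamond({\underline q}_i)_i}((a_{ij})_{i,j})$. *)

theory Defs
  imports Complex_Main "HOL-Combinatorics.Permutations"
begin

text \<open>Conventions: everything is 0-based. A map h : [n] \<rightarrow> \<nat> is a list of length n;
a composition r \<in> Comp_p(n) is a list of length p with sum n; arguments of an operation
are lists of length p. An ordered partition of [n] is a list of (possibly empty) sets.\<close>

definition Lp :: "nat \<Rightarrow> nat list set" where
  "Lp n = {h. n \<ge> 1 \<and> length h = n \<and> (\<Sum>x\<leftarrow>h. (1/2::real) ^ x) = 1}"

definition Comp :: "nat \<Rightarrow> nat \<Rightarrow> nat list set" where
  "Comp p n = {r. length r = p \<and> sum_list r = n}"

definition bstart :: "nat list \<Rightarrow> nat \<Rightarrow> nat" where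
  "bstart r i = sum_list (take i r)"

definition block :: "nat list \<Rightarrow> nat \<Rightarrow> nat set" where
  "block r i = {bstart r i ..< bstart r i + r ! i}"

definition blocks :: "nat list \<Rightarrow> nat set list" where
  "blocks r = map (block r) [0..<length r]"

definition blk_idx :: "nat list \<Rightarrow> nat \<Rightarrow> nat" where
  "blk_idx r x = (THE i. i < length r \<and> x \<in> block r i)"

definition ordpart :: "nat \<Rightarrow> nat set list \<Rightarrow> bool" where
  "ordpart n R \<longleftrightarrow> (\<Union>i<length R. R ! i) = {..<n} \<and>
      (\<forall>i<length R. \<forall>j<length R. i \<noteq> j \<longrightarrow> R ! i \<inter> R ! j = {})"

definition CR :: "nat \<Rightarrow> nat set list \<Rightarrow> nat list set" where
  "CR n R = {h. h \<in> Lp n \<and> (\<forall>i<length R. \<forall>x\<in>R ! i. \<forall>y\<in>R ! i. h ! x = h ! y)}"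

definition Cr :: "nat list \<Rightarrow> nat list set" where
  "Cr r = CR (sum_list r) (blocks r)"

definition act :: "(nat \<Rightarrow> nat) \<Rightarrow> nat list \<Rightarrow> nat list" where
  "act \<sigma> h = map (\<lambda>y. h ! inv_into {..<length h} \<sigma> y) [0..<length h]"

definition cperm :: "(nat \<Rightarrow> nat) \<Rightarrow> 'b list \<Rightarrow> 'b list" where
  "cperm \<rho> xs = map (\<lambda>i. xs ! inv \<rho> i) [0..<length xs]"

text \<open>rho^*: the block permutation sending block i of r onto block rho(i) of r^rho\<close>
definition block_perm :: "nat list \<Rightarrow> (nat \<Rightarrow> nat) \<Rightarrow> nat \<Rightarrow> nat" where
  "block_perm r \<rho> x = bstart (cperm \<rho> r) (\<rho> (blk_idx r x)) + (x - bstart r (blk_idx r x))"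

text \<open>phi_{h,R} := phi_{tau\<cdot>h, r} for tau with tau(R_i) = r_i\<close>
definition phiR :: "(nat list \<Rightarrow> nat list \<Rightarrow> 'a list \<Rightarrow> 'a) \<Rightarrow> nat list \<Rightarrow> nat set list \<Rightarrow> 'a list \<Rightarrow> 'a" where
  "phiR \<phi> h R as = (let r = map card R;
      \<tau> = (SOME \<tau>. bij_betw \<tau> {..<length h} {..<length h} \<and> (\<forall>i<length R. \<tau> ` (R ! i) = block r i))
     in \<phi> (act \<tau> h) r as)"

text \<open>full operadic composition mu(h \<otimes> g_1 \<otimes> ... \<otimes> g_n)\<close>
definition mu :: "nat list \<Rightarrow> nat list list \<Rightarrow> nat list" where
  "mu h gs = concat (map (\<lambda>j. map (\<lambda>x. h ! j + x) (gs ! j)) [0..<length h])"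

definition gammaP :: "nat \<Rightarrow> nat \<Rightarrow> nat set list \<Rightarrow> nat set list" where
  "gammaP k m Q = map (\<lambda>Qj. \<Union>t<k. (\<lambda>x. x + t * m) ` Qj) Q"

definition tensorP :: "nat set list \<Rightarrow> nat \<Rightarrow> nat set list \<Rightarrow> nat set list" where
  "tensorP R n Q = R @ map ((`) (\<lambda>x. x + n)) Q"

text \<open>r \<diamond> (q_i)_i = gamma_{r_1}(q_1) \<otimes> ... \<otimes> gamma_{r_p}(q_p), built left to right;
  the partition gamma_{r_i}(q_i) is a partition of [r_i m_i].\<close>
fun diamond_aux :: "nat set list \<Rightarrow> nat \<Rightarrow> (nat \<times> nat list) list \<Rightarrow> nat set list" where
  "diamond_aux R n [] = R"
| "diamond_aux R n ((k, q) # rest) =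
     diamond_aux (tensorP R n (gammaP k (sum_list q) (blocks q))) (n + k * sum_list q) rest"

definition diamond :: "nat list \<Rightarrow> nat list list \<Rightarrow> nat set list" where
  "diamond r qs = diamond_aux [] 0 (zip r qs)"

text \<open>The coefficient prod_i 1/r_i! prod_j (r_i q_ij)!/(q_ij!)^{r_i} of (S7); it is a
  natural number whenever every q_i has positive sum, which holds in (S7).\<close>
definition coefS7 :: "nat list \<Rightarrow> nat list list \<Rightarrow> nat" where
  "coefS7 r qs = (\<Prod>i<length r.
      (\<Prod>q\<leftarrow>qs ! i. fact (r ! i * q)) div (fact (r ! i) * (\<Prod>q\<leftarrow>qs ! i. fact q ^ (r ! i))))"

definition step_algebra ::
  "('k::field \<Rightarrow> 'a::ab_group_add \<Rightarrow> 'a) \<Rightarrow> (nat list \<Rightarrow> nat list \<Rightarrow> 'a list \<Rightarrow> 'a) \<Rightarrow> bool" where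
  "step_algebra scale \<phi> \<longleftrightarrow>
   \<comment> \<open>(S1)\<close>
   (\<forall>r h as \<rho>. h \<in> Cr r \<and> length as = length r \<and> \<rho> permutes {..<length r} \<longrightarrow>
       \<phi> (act (block_perm r \<rho>) h) (cperm \<rho> r) (cperm \<rho> as) = \<phi> h r as) \<and>
   \<comment> \<open>(S2)\<close>
   (\<forall>r h a0 as. h \<in> Cr r \<and> length as = length r \<longrightarrow>
       \<phi> h (0 # r) (a0 # as) = \<phi> h r as) \<and>
   \<comment> \<open>(S3)\<close>
   (\<forall>r1 r h c a1 as. h \<in> Cr (r1 # r) \<and> length as = length r \<longrightarrow>
       \<phi> h (r1 # r) (scale c a1 # as) = scale (c ^ r1) (\<phi> h (r1 # r) (a1 # as))) \<and>
   \<comment> \<open>(S4)\<close>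
   (\<forall>l m r h a1 as. h \<in> Cr ((l + m) # r) \<and> length as = length r \<longrightarrow>
       scale (of_nat ((l + m) choose l)) (\<phi> h ((l + m) # r) (a1 # as))
         = \<phi> h (l # m # r) (a1 # a1 # as)) \<and>
   \<comment> \<open>(S5)\<close>
   (\<forall>r1 r h a b as. h \<in> Cr (r1 # r) \<and> length as = length r \<longrightarrow>
       \<phi> h (r1 # r) ((a + b) # as) = (\<Sum>l\<le>r1. \<phi> h (l # (r1 - l) # r) (a # b # as))) \<and>
   \<comment> \<open>(S6)\<close>
   (\<forall>a. \<phi> [0] [1] [a] = a) \<and>
   \<comment> \<open>(S7)\<close>
   (\<forall>r h qs gs ass. h \<in> Cr r \<and> length qs = length r \<and> length gs = length r \<and> length ass = length r \<and>
       (\<forall>i<length r. gs ! i \<in> Cr (qs ! i) \<and> length (ass ! i) = length (qs ! i)) \<longrightarrow>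
       \<phi> h r (map (\<lambda>i. \<phi> (gs ! i) (qs ! i) (ass ! i)) [0..<length r])
         = scale (of_nat (coefS7 r qs))
             (phiR \<phi> (mu h (concat (map (\<lambda>i. replicate (r ! i) (gs ! i)) [0..<length r])))
                   (diamond r qs) (concat ass)))"

definition level_algebra :: "('k::field \<Rightarrow> 'a::ab_group_add \<Rightarrow> 'a) \<Rightarrow> ('a \<Rightarrow> 'a \<Rightarrow> 'a) \<Rightarrow> bool" where
  "level_algebra scale prd \<longleftrightarrow>
     (\<forall>a b c. prd (a + b) c = prd a c + prd b c) \<and>
     (\<forall>a b c. prd a (b + c) = prd a b + prd a c) \<and>
     (\<forall>x a b. prd (scale x a) b = scale x (prd a b)) \<and>
     (\<forall>x a b. prd a (scale x b) = scale x (prd a b)) \<and>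
     (\<forall>a b. prd a b = prd b a) \<and>
     (\<forall>a b c d. prd (prd a b) (prd c d) = prd (prd a c) (prd b d))"

end

theory Submission
  imports Defs
begin

lemma act_const:
  assumes "\<And>y. y < length h \<Longrightarrow> \<exists>x<length h. \<sigma> x = y"
    and "\<And>i. i < length h \<Longrightarrow> h ! i = c"
  shows "act \<sigma> h = h"
proof -
  have "\<And>y. y < length h \<Longrightarrow> h ! inv_into {..<length h} \<sigma> y = c"
  proof -
    fix y assume y: "y < length h"
    then have "y \<in> \<sigma> ` {..<length h}" using assms(1) by blast
    then have "inv_into {..<length h} \<sigma> y \<in> {..<length h}" by (rule inv_into_into)
    then show "h ! inv_into {..<length h} \<sigma> y = c" using assms(2) by simp
  qed
  then show ?thesis unfolding act_def
    by (intro nth_equalityI) (auto simp: assms(2))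
qed

lemma blk_idx_eq: "i < length r \<Longrightarrow> x \<in> block r i \<Longrightarrow>
   (\<And>j. j < length r \<Longrightarrow> x \<in> block r j \<Longrightarrow> j = i) \<Longrightarrow> blk_idx r x = i"
  unfolding blk_idx_def by (rule the_equality) blast+

lemma less4: "(i::nat) < 4 \<longleftrightarrow> i = 0 \<or> i = 1 \<or> i = 2 \<or> i = 3" by auto
lemma less3: "(i::nat) < 3 \<longleftrightarrow> i = 0 \<or> i = 1 \<or> i = 2" by auto
lemma less2: "(i::nat) < 2 \<longleftrightarrow> i = 0 \<or> i = 1" by auto

lemma Lp11: "[1,1] \<in> Lp 2" by (simp add: Lp_def)
lemma Lp2222: "[2,2,2,2] \<in> Lp 4" by (simp add: Lp_def power2_eq_square)

lemma blocks11: "blocks [1,1] = [{0},{1}]"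
  by (simp add: blocks_def block_def bstart_def upt_rec)
lemma blocks011: "blocks [0,1,1] = [{},{0},{1}]"
  by (simp add: blocks_def block_def bstart_def upt_rec)
lemma blocks1111: "blocks [1,1,1,1] = [{0},{1},{2},{3}]"
  by (simp add: blocks_def block_def bstart_def upt_rec)

lemma CR_sing: "h \<in> Lp n \<Longrightarrow> list_all (\<lambda>S. \<forall>x\<in>S. \<forall>y\<in>S. x = y) R \<Longrightarrow> h \<in> CR n R"
  unfolding CR_def list_all_length by (auto; metis)

lemma Cr11: "[1,1] \<in> Cr [1,1]"
proof -
  have s: "sum_list [1,1::nat] = 2" by simp
  show ?thesis unfolding Cr_def blocks11 s by (rule CR_sing[OF Lp11]) simp
qed
lemma Cr11s: "[Suc 0, Suc 0] \<in> Cr [Suc 0, Suc 0]"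
  using Cr11 by simp
lemma Cr011: "[1,1] \<in> Cr [0,1,1]"
proof -
  have s: "sum_list [0,1,1::nat] = 2" by simp
  show ?thesis unfolding Cr_def blocks011 s by (rule CR_sing[OF Lp11]) simp
qed
lemma Cr1111: "[2,2,2,2] \<in> Cr [1,1,1,1]"
proof -
  have s: "sum_list [1,1,1,1::nat] = 4" by simp
  have l: "list_all (\<lambda>S. \<forall>x\<in>S. \<forall>y\<in>S. x = y) [{0::nat},{1},{2},{3}]" by simp
  have c: "[2,2,2,2] \<in> CR 4 [{0},{1},{2},{3}]" by (rule CR_sing[OF Lp2222 l])
  show ?thesis unfolding Cr_def blocks1111 s by (rule c)
qed


lemma block_nth: "i < length r \<Longrightarrow> block r i = blocks r ! i"
  by (simp add: blocks_def)

abbreviation tr :: "nat \<Rightarrow> nat \<Rightarrow> nat \<Rightarrow> nat" where "tr \<equiv> Transposition.transpose"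

lemma cp11: "cperm (tr 0 1) [x, y] = [y, x]"
  by (simp add: cperm_def upt_rec Transposition.transpose_def)
lemma cp3: "cperm (tr 0 1) [x, y, z] = [y, x, z]"
  by (simp add: cperm_def upt_rec Transposition.transpose_def)
lemma cp4: "cperm (tr 1 2) [x, y, z, w] = [x, z, y, w]"
  by (simp add: cperm_def upt_rec Transposition.transpose_def)

lemma bi11_0: "blk_idx [1,1] 0 = 0"
  by (rule blk_idx_eq) (auto simp: block_def bstart_def less_Suc_eq)
lemma bi11_1: "blk_idx [1,1] 1 = 1"
  by (rule blk_idx_eq) (auto simp: block_def bstart_def less_Suc_eq)
lemma bi011_0: "blk_idx [0,1,1] 0 = 1"
  by (rule blk_idx_eq) (auto simp: block_def bstart_def less_Suc_eq)
lemma bi011_1: "blk_idx [0,1,1] 1 = 2"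
  by (rule blk_idx_eq) (auto simp: block_def bstart_def less_Suc_eq)
lemma bi1111_0: "blk_idx [1,1,1,1] 0 = 0"
  by (rule blk_idx_eq) (auto simp: block_def bstart_def less_Suc_eq)
lemma bi1111_1: "blk_idx [1,1,1,1] 1 = 1"
  by (rule blk_idx_eq) (auto simp: block_def bstart_def less_Suc_eq)
lemma bi1111_2: "blk_idx [1,1,1,1] 2 = 2"
  by (rule blk_idx_eq) (auto simp: block_def bstart_def less_Suc_eq)
lemma bi1111_3: "blk_idx [1,1,1,1] 3 = 3"
  by (rule blk_idx_eq) (auto simp: block_def bstart_def less_Suc_eq)

lemma bp11: "block_perm [1,1] (tr 0 1) 0 = 1" "block_perm [1,1] (tr 0 1) 1 = 0"
  unfolding block_perm_def bi11_0 bi11_1 cp11 by (simp_all add: bstart_def)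
lemma bp011: "block_perm [0,1,1] (tr 0 1) 0 = 0" "block_perm [0,1,1] (tr 0 1) 1 = 1"
  unfolding block_perm_def bi011_0 bi011_1 cp3 by (simp_all add: bstart_def)
lemma bp1111: "block_perm [1,1,1,1] (tr 1 2) 0 = 0" "block_perm [1,1,1,1] (tr 1 2) 1 = 2"
   "block_perm [1,1,1,1] (tr 1 2) 2 = 1" "block_perm [1,1,1,1] (tr 1 2) 3 = 3"
  unfolding block_perm_def bi1111_0 bi1111_1 bi1111_2 bi1111_3 cp4
  by (simp_all add: bstart_def Transposition.transpose_def)

lemma act_const':
  assumes "\<sigma> ` {..<n} = {..<n}" "length h = n" "\<forall>i<n. h ! i = c"
  shows "act \<sigma> h = h"
proof (rule act_const[where c=c])
  fix y assume "y < length h"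
  then have "y \<in> \<sigma> ` {..<n}" using assms by simp
  then show "\<exists>x<length h. \<sigma> x = y" using assms by force
qed (use assms in auto)

lemma lessThan2: "{..<2::nat} = {0,1}" by auto
lemma lessThan4: "{..<4::nat} = {0,1,2,3}" by auto

lemma act11: "act (block_perm [1,1] (tr 0 1)) [1,1] = [1,1]"
  by (rule act_const'[where n=2 and c=1]) (simp del: One_nat_def add: lessThan2 bp11 insert_commute, simp, auto simp: less2)
lemma act011: "act (block_perm [0,1,1] (tr 0 1)) [1,1] = [1,1]"
  by (rule act_const'[where n=2 and c=1]) (simp del: One_nat_def add: lessThan2 bp011 insert_commute, simp, auto simp: less2)
lemma act1111: "act (block_perm [1,1,1,1] (tr 1 2)) [2,2,2,2] = [2,2,2,2]"
  by (rule act_const'[where n=4 and c=2]) (simp del: One_nat_def add: lessThan4 bp1111 insert_commute, simp, auto simp: less4)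

lemma phiR4: "phiR \<phi> [2,2,2,2] [{0},{1},{2},{3}] as = \<phi> [2,2,2,2] [1,1,1,1] as"
proof -
  have mc: "map card [{0::nat},{1},{2},{3}] = [1,1,1,1]" by simp
  define P where "P = (\<lambda>\<tau>. bij_betw \<tau> {..<length [2,2,2,2::nat]} {..<length [2,2,2,2::nat]} \<and>
     (\<forall>i<length [{0::nat},{1},{2},{3}]. \<tau> ` ([{0::nat},{1},{2},{3}] ! i) = block [1,1,1,1] i))"
  have bl: "block [1,1,1,1] i = [{0::nat},{1},{2},{3}] ! i" if "i < 4" for i
  proof -
    have "block [1,1,1,1] i = blocks [1,1,1,1] ! i" by (rule block_nth) (use that in simp)
    also have "\<dots> = [{0::nat},{1},{2},{3}] ! i" by (simp only: blocks1111)
    finally show ?thesis .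
  qed
  have "P id" unfolding P_def by (simp del: One_nat_def add: bl)
  then have "P (SOME \<tau>. P \<tau>)" by (metis someI)
  moreover have "\<forall>\<tau>. P \<tau> \<longrightarrow> bij_betw \<tau> {..<4} {..<4}" unfolding P_def by (simp add: numeral_eq_Suc)
  ultimately have b: "bij_betw (SOME \<tau>. P \<tau>) {..<4} {..<4}" by blast
  have "act (SOME \<tau>. P \<tau>) [2,2,2,2] = [2,2,2,2]"
  proof (rule act_const[where c=2])
    fix y :: nat assume "y < length [2,2,2,2::nat]"
    then have "y \<in> (SOME \<tau>. P \<tau>) ` {..<4}" using b by (simp add: bij_betw_def)
    then show "\<exists>x<length [2,2,2,2::nat]. (SOME \<tau>. P \<tau>) x = y" by (auto simp: numeral_eq_Suc)
  qed (auto simp: less_Suc_eq)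
  then show ?thesis unfolding phiR_def Let_def mc P_def[symmetric] by simp
qed

lemma blocks11s: "blocks [Suc 0, Suc 0] = [{0},{Suc 0}]"
  by (simp add: blocks_def block_def bstart_def upt_rec)

lemma diamond4: "diamond [1,1] [[1,1],[1,1]] = [{0},{1},{2},{3}]"
  by (simp add: diamond_def gammaP_def tensorP_def blocks11 blocks11s lessThan_Suc eval_nat_numeral)

lemma mu4: "mu [1,1] (concat (map (\<lambda>i. replicate ([1,1] ! i) ([[1,1],[1,1::nat]] ! i)) [0..<length [1,1::nat]])) = [2,2,2,2]"
  by (simp add: mu_def upt_rec)

lemma coef4: "coefS7 [1,1] [[1,1],[1,1]] = 1"
  by (simp add: coefS7_def lessThan_Suc)

theorem proposition6p1:
  fixes scale :: "'k::field \<Rightarrow> 'a::ab_group_add \<Rightarrow> 'a"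
    and \<phi> :: "nat list \<Rightarrow> nat list \<Rightarrow> 'a list \<Rightarrow> 'a"
  assumes "vector_space scale"
    and "step_algebra scale \<phi>"
  shows "level_algebra scale (\<lambda>a b. \<phi> [1, 1] [1, 1] [a, b])"
proof -
  note SS = assms(2)[unfolded step_algebra_def]
  note C1 = SS[THEN conjunct1]
  note C2 = SS[THEN conjunct2, THEN conjunct1]
  note C3 = SS[THEN conjunct2, THEN conjunct2, THEN conjunct1]
  note C5 = SS[THEN conjunct2, THEN conjunct2, THEN conjunct2, THEN conjunct2, THEN conjunct1]
  note C7 = SS[THEN conjunct2, THEN conjunct2, THEN conjunct2, THEN conjunct2, THEN conjunct2, THEN conjunct2]
  have S1: "\<And>r h as \<rho>. h \<in> Cr r \<Longrightarrow> length as = length r \<Longrightarrow> \<rho> permutes {..<length r} \<Longrightarrow>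
       \<phi> (act (block_perm r \<rho>) h) (cperm \<rho> r) (cperm \<rho> as) = \<phi> h r as"
    using C1 by blast
  have S2: "\<And>r h a0 as. h \<in> Cr r \<Longrightarrow> length as = length r \<Longrightarrow> \<phi> h (0 # r) (a0 # as) = \<phi> h r as"
    using C2 by blast
  have S3: "\<And>r1 r h c a1 as. h \<in> Cr (r1 # r) \<Longrightarrow> length as = length r \<Longrightarrow>
       \<phi> h (r1 # r) (scale c a1 # as) = scale (c ^ r1) (\<phi> h (r1 # r) (a1 # as))"
    using C3 by blast
  have S5: "\<And>r1 r h a b as. h \<in> Cr (r1 # r) \<Longrightarrow> length as = length r \<Longrightarrow>
       \<phi> h (r1 # r) ((a + b) # as) = (\<Sum>l\<le>r1. \<phi> h (l # (r1 - l) # r) (a # b # as))"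
    using C5 by blast
  have S7: "\<And>r h qs gs ass. h \<in> Cr r \<Longrightarrow> length qs = length r \<Longrightarrow> length gs = length r \<Longrightarrow> length ass = length r \<Longrightarrow>
       (\<forall>i<length r. gs ! i \<in> Cr (qs ! i) \<and> length (ass ! i) = length (qs ! i)) \<Longrightarrow>
       \<phi> h r (map (\<lambda>i. \<phi> (gs ! i) (qs ! i) (ass ! i)) [0..<length r])
         = scale (of_nat (coefS7 r qs))
             (phiR \<phi> (mu h (concat (map (\<lambda>i. replicate (r ! i) (gs ! i)) [0..<length r])))
                   (diamond r qs) (concat ass))"
    using C7 by blast
  have one: "\<And>x. scale 1 x = x" using assms(1) unfolding vector_space_def by simp
  define P where "P = (\<lambda>a b. \<phi> [1, 1] [1, 1] [a, b])"
  have comm: "P a b = P b a" for a b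
  proof -
    have "\<phi> (act (block_perm [1,1] (tr 0 1)) [1,1]) (cperm (tr 0 1) [1,1]) (cperm (tr 0 1) [a,b])
        = \<phi> [1,1] [1,1] [a,b]"
      by (rule S1[OF Cr11]) (simp_all add: permutes_swap_id)
    then show ?thesis unfolding P_def act11 cp11 by simp
  qed
  have addl: "P (a + b) c = P a c + P b c" for a b c
  proof -
    have "P (a + b) c = (\<Sum>l\<le>1. \<phi> [1,1] [l, 1 - l, 1] [a, b, c])"
      unfolding P_def by (rule S5[where r="[1]", OF Cr11]) simp
    also have "\<dots> = \<phi> [1,1] [0,1,1] [a,b,c] + \<phi> [1,1] [1,0,1] [a,b,c]"
      by (simp add: atMost_Suc)
    also have "\<phi> [1,1] [0,1,1] [a,b,c] = P b c"
      unfolding P_def by (rule S2[OF Cr11]) simp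
    also have "\<phi> [1,1] [1,0,1] [a,b,c] = P a c"
    proof -
      have "\<phi> (act (block_perm [0,1,1] (tr 0 1)) [1,1]) (cperm (tr 0 1) [0,1,1]) (cperm (tr 0 1) [b,a,c])
          = \<phi> [1,1] [0,1,1] [b,a,c]"
        by (rule S1[OF Cr011]) (simp_all add: permutes_swap_id)
      also have "\<dots> = P a c" unfolding P_def by (rule S2[OF Cr11]) simp
      finally show ?thesis unfolding act011 cp3 .
    qed
    finally show ?thesis by (simp add: add.commute)
  qed
  have scl: "P (scale x a) b = scale x (P a b)" for x a b
    unfolding P_def using S3[where r="[1]", OF Cr11, of "[b]" x a] by simp
  have med: "P (P a b) (P c d) = \<phi> [2,2,2,2] [1,1,1,1] [a,b,c,d]" for a b c d
  proof -
    have "\<phi> [1,1] [1,1] (map (\<lambda>i. \<phi> ([[1,1],[1,1::nat]] ! i) ([[1,1],[1,1::nat]] ! i) ([[a,b],[c,d]] ! i)) [0..<length [1,1::nat]])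
       = scale (of_nat (coefS7 [1,1] [[1,1],[1,1]]))
             (phiR \<phi> (mu [1,1] (concat (map (\<lambda>i. replicate ([1,1] ! i) ([[1,1],[1,1::nat]] ! i)) [0..<length [1,1::nat]])))
                   (diamond [1,1] [[1,1],[1,1]]) (concat [[a,b],[c,d]]))"
      by (rule S7[OF Cr11]) (simp_all add: less_Suc_eq Cr11s)
    then show ?thesis unfolding mu4 diamond4 coef4 phiR4 P_def by (simp add: upt_rec one)
  qed
  have swap4: "\<phi> [2,2,2,2] [1,1,1,1] [a,c,b,d] = \<phi> [2,2,2,2] [1,1,1,1] [a,b,c,d]" for a b c d
  proof -
    have "\<phi> (act (block_perm [1,1,1,1] (tr 1 2)) [2,2,2,2]) (cperm (tr 1 2) [1,1,1,1]) (cperm (tr 1 2) [a,b,c,d])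
        = \<phi> [2,2,2,2] [1,1,1,1] [a,b,c,d]"
      by (rule S1[OF Cr1111]) (simp_all add: permutes_swap_id)
    then show ?thesis unfolding act1111 cp4 .
  qed
  show ?thesis
    unfolding level_algebra_def P_def[symmetric]
  proof (intro conjI allI)
    fix a b c show "P (a + b) c = P a c + P b c" by (rule addl)
  next
    fix a b c show "P a (b + c) = P a b + P a c" using addl comm by metis
  next
    fix x a b show "P (scale x a) b = scale x (P a b)" by (rule scl)
  next
    fix x a b show "P a (scale x b) = scale x (P a b)" using scl comm by metis
  next
    fix a b show "P a b = P b a" by (rule comm)
  next
    fix a b c d show "P (P a b) (P c d) = P (P a c) (P b d)"
      using med swap4 by metis
  qed
qed

end
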